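(* Let $(A,+,\circ)$ be a skew brace and let $t(x_1,\dots,x_n)$ be a term in the language $\{+,-,*,\bar{\ },0\}$ such that no occurrence of the variable $x_1$ lies inside a subterm whose outermost operation is $*$. Then there exists $k\in\mathbb{Z}$ such that $t(x_1+z,x_2,\dots,x_n)=t(x_1,x_2,\dots,x_n)+kz$ for every $z\in\zeta(A)$ and all $x_1,\dots,x_n\in A$.
   Context: A skew brace is a triple $(A,+,\circ)$ where $(A,+)$ and $(A,\circ)$ are groups (not necessarily abelian; $+$ is written additively) such that $x\circ(y+z)=(x\circ y)-x+(x\circ z)$ for all $x,y,z\in A$; the common neutral element is $0$, $-x$ is the $+$-inverse and $\bar x$ the $\circ$-inverse. Let $\lambda_x(y)=-x+(x\circ y)$ and $x*y=-x+(x\circ y)-y$; $[x,y]_+=x+y-x-y$. Terms are built from variables and the constant $0$ using binary $+$, binary $*$, unary $-$ and unary $\bar{\ }$ (note $x\circ y=x+(x*y)+y$, so this language is equivalent to $\{+,-,\circ,\bar{\ },0\}$). The center is $\zeta(A)=\{x\in A: x*y=y*x=[x,y]_+=0\ \forall y\in A\}=\{x\in A: x+y=y+x=x\circ y=y\circ x\ \forall y\in A\}$. For $k\in\mathbb{Z}$, $kz$ denotes the $k$-th multiple of $z$ in $(A,+)$. *)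

theory Defs
  imports Main
begin

definition is_group :: "'a set \<Rightarrow> ('a \<Rightarrow> 'a \<Rightarrow> 'a) \<Rightarrow> 'a \<Rightarrow> ('a \<Rightarrow> 'a) \<Rightarrow> bool" where
  "is_group A f e iv \<longleftrightarrow>
     e \<in> A \<and>
     (\<forall>x\<in>A. \<forall>y\<in>A. f x y \<in> A) \<and>
     (\<forall>x\<in>A. iv x \<in> A) \<and>
     (\<forall>x\<in>A. \<forall>y\<in>A. \<forall>z\<in>A. f (f x y) z = f x (f y z)) \<and>
     (\<forall>x\<in>A. f e x = x \<and> f x e = x) \<and>
     (\<forall>x\<in>A. f (iv x) x = e \<and> f x (iv x) = e)"

definition skew_brace ::
  "'a set \<Rightarrow> ('a \<Rightarrow> 'a \<Rightarrow> 'a) \<Rightarrow> ('a \<Rightarrow> 'a) \<Rightarrow> 'a \<Rightarrow> ('a \<Rightarrow> 'a \<Rightarrow> 'a) \<Rightarrow> ('a \<Rightarrow> 'a) \<Rightarrow> bool" where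
  "skew_brace A add neg zero circ cinv \<longleftrightarrow>
     is_group A add zero neg \<and> is_group A circ zero cinv \<and>
     (\<forall>x\<in>A. \<forall>y\<in>A. \<forall>z\<in>A. circ x (add y z) = add (add (circ x y) (neg x)) (circ x z))"

definition sb_star :: "('a \<Rightarrow> 'a \<Rightarrow> 'a) \<Rightarrow> ('a \<Rightarrow> 'a) \<Rightarrow> ('a \<Rightarrow> 'a \<Rightarrow> 'a) \<Rightarrow> 'a \<Rightarrow> 'a \<Rightarrow> 'a" where
  "sb_star add neg circ x y = add (add (neg x) (circ x y)) (neg y)"

definition sb_comm :: "('a \<Rightarrow> 'a \<Rightarrow> 'a) \<Rightarrow> ('a \<Rightarrow> 'a) \<Rightarrow> 'a \<Rightarrow> 'a \<Rightarrow> 'a" where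
  "sb_comm add neg x y = add (add (add x y) (neg x)) (neg y)"

definition sb_center ::
  "'a set \<Rightarrow> ('a \<Rightarrow> 'a \<Rightarrow> 'a) \<Rightarrow> ('a \<Rightarrow> 'a) \<Rightarrow> 'a \<Rightarrow> ('a \<Rightarrow> 'a \<Rightarrow> 'a) \<Rightarrow> 'a set" where
  "sb_center A add neg zero circ =
     {x \<in> A. \<forall>y\<in>A. sb_star add neg circ x y = zero \<and> sb_star add neg circ y x = zero
                  \<and> sb_comm add neg x y = zero}"

definition int_mult :: "('a \<Rightarrow> 'a \<Rightarrow> 'a) \<Rightarrow> ('a \<Rightarrow> 'a) \<Rightarrow> 'a \<Rightarrow> int \<Rightarrow> 'a \<Rightarrow> 'a" where
  "int_mult add neg zero k z =
     (if 0 \<le> k then ((\<lambda>w. add w z) ^^ nat k) zero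
      else ((\<lambda>w. add w (neg z)) ^^ nat (- k)) zero)"

text \<open>Terms in the language {+, -, *, bar, 0}; variables indexed by nat
  (variable x_1 of the paper is Var 0).\<close>
datatype sbterm = Var nat | Zero | Plus sbterm sbterm | Star sbterm sbterm
  | Neg sbterm | Bar sbterm

fun vars :: "sbterm \<Rightarrow> nat set" where
  "vars (Var i) = {i}"
| "vars Zero = {}"
| "vars (Plus s t) = vars s \<union> vars t"
| "vars (Star s t) = vars s \<union> vars t"
| "vars (Neg s) = vars s"
| "vars (Bar s) = vars s"

fun not_under_star :: "nat \<Rightarrow> sbterm \<Rightarrow> bool" where
  "not_under_star i (Var j) = True"
| "not_under_star i Zero = True"
| "not_under_star i (Plus s t) = (not_under_star i s \<and> not_under_star i t)"
| "not_under_star i (Star s t) = (i \<notin> vars s \<and> i \<notin> vars t)"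
| "not_under_star i (Neg s) = not_under_star i s"
| "not_under_star i (Bar s) = not_under_star i s"

fun sb_eval ::
  "('a \<Rightarrow> 'a \<Rightarrow> 'a) \<Rightarrow> ('a \<Rightarrow> 'a) \<Rightarrow> 'a \<Rightarrow> ('a \<Rightarrow> 'a \<Rightarrow> 'a) \<Rightarrow> ('a \<Rightarrow> 'a)
   \<Rightarrow> (nat \<Rightarrow> 'a) \<Rightarrow> sbterm \<Rightarrow> 'a" where
  "sb_eval add neg zero circ cinv \<rho> (Var i) = \<rho> i"
| "sb_eval add neg zero circ cinv \<rho> Zero = zero"
| "sb_eval add neg zero circ cinv \<rho> (Plus s t) =
     add (sb_eval add neg zero circ cinv \<rho> s) (sb_eval add neg zero circ cinv \<rho> t)"
| "sb_eval add neg zero circ cinv \<rho> (Star s t) =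
     sb_star add neg circ (sb_eval add neg zero circ cinv \<rho> s) (sb_eval add neg zero circ cinv \<rho> t)"
| "sb_eval add neg zero circ cinv \<rho> (Neg s) = neg (sb_eval add neg zero circ cinv \<rho> s)"
| "sb_eval add neg zero circ cinv \<rho> (Bar s) = cinv (sb_eval add neg zero circ cinv \<rho> s)"

end

theory Submission
  imports Defs
begin

locale sbr =
  fixes A :: "'a set" and add :: "'a \<Rightarrow> 'a \<Rightarrow> 'a" (infixl "\<oplus>" 65)
    and neg :: "'a \<Rightarrow> 'a" and zero :: 'a and circ :: "'a \<Rightarrow> 'a \<Rightarrow> 'a" and cinv :: "'a \<Rightarrow> 'a"
  assumes sb: "skew_brace A add neg zero circ cinv"
begin

lemma gA: "is_group A add zero neg" and gC: "is_group A circ zero cinv"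
  and br: "\<And>x y z. x\<in>A \<Longrightarrow> y\<in>A \<Longrightarrow> z\<in>A \<Longrightarrow> circ x (y \<oplus> z) = (circ x y \<oplus> neg x) \<oplus> circ x z"
  using sb unfolding skew_brace_def by auto

lemma zA[simp]: "zero \<in> A" and addA[simp]: "x\<in>A \<Longrightarrow> y\<in>A \<Longrightarrow> x \<oplus> y \<in> A"
  and negA[simp]: "x\<in>A \<Longrightarrow> neg x \<in> A"
  and circA[simp]: "x\<in>A \<Longrightarrow> y\<in>A \<Longrightarrow> circ x y \<in> A"
  and cinvA[simp]: "x\<in>A \<Longrightarrow> cinv x \<in> A"
  using gA gC unfolding is_group_def by auto

lemma aassoc: "x\<in>A \<Longrightarrow> y\<in>A \<Longrightarrow> z\<in>A \<Longrightarrow> (x \<oplus> y) \<oplus> z = x \<oplus> (y \<oplus> z)"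
  and azl[simp]: "x\<in>A \<Longrightarrow> zero \<oplus> x = x" and azr[simp]: "x\<in>A \<Longrightarrow> x \<oplus> zero = x"
  and anl[simp]: "x\<in>A \<Longrightarrow> neg x \<oplus> x = zero" and anr[simp]: "x\<in>A \<Longrightarrow> x \<oplus> neg x = zero"
  using gA unfolding is_group_def by auto

lemma cassoc: "x\<in>A \<Longrightarrow> y\<in>A \<Longrightarrow> z\<in>A \<Longrightarrow> circ (circ x y) z = circ x (circ y z)"
  and czl[simp]: "x\<in>A \<Longrightarrow> circ zero x = x" and czr[simp]: "x\<in>A \<Longrightarrow> circ x zero = x"
  and cnl[simp]: "x\<in>A \<Longrightarrow> circ (cinv x) x = zero" and cnr[simp]: "x\<in>A \<Longrightarrow> circ x (cinv x) = zero"
  using gC unfolding is_group_def by auto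

lemma L1: "u\<in>A \<Longrightarrow> y\<in>A \<Longrightarrow> u \<oplus> neg y = v \<Longrightarrow> u = v \<oplus> y"
proof -
  assume h: "u\<in>A" "y\<in>A" "u \<oplus> neg y = v"
  have "v \<oplus> y = (u \<oplus> neg y) \<oplus> y" using h by simp
  also have "\<dots> = u \<oplus> (neg y \<oplus> y)" using h(1,2) by (simp only: aassoc negA)
  also have "\<dots> = u" using h by simp
  finally show ?thesis by simp
qed

lemma L3: "a\<in>A \<Longrightarrow> v\<in>A \<Longrightarrow> a \<oplus> v = y \<Longrightarrow> v = neg a \<oplus> y"
proof -
  assume h: "a\<in>A" "v\<in>A" "a \<oplus> v = y"
  have "neg a \<oplus> y = neg a \<oplus> (a \<oplus> v)" using h by simp
  also have "\<dots> = (neg a \<oplus> a) \<oplus> v" using h(1,2) by (simp only: aassoc negA)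
  also have "\<dots> = v" using h by simp
  finally show ?thesis by (rule sym)
qed

lemma neg_unique: "x\<in>A \<Longrightarrow> y\<in>A \<Longrightarrow> x \<oplus> y = zero \<Longrightarrow> neg x = y"
  using L3[of x y zero] by simp

lemma cinv_unique: "x\<in>A \<Longrightarrow> y\<in>A \<Longrightarrow> circ x y = zero \<Longrightarrow> cinv x = y"
proof -
  assume h: "x\<in>A" "y\<in>A" "circ x y = zero"
  have "cinv x = circ (cinv x) (circ x y)" using h by simp
  also have "\<dots> = circ (circ (cinv x) x) y" using h by (simp only: cassoc cinvA)
  also have "\<dots> = y" using h by simp
  finally show ?thesis .
qed

lemma negneg: "x\<in>A \<Longrightarrow> neg (neg x) = x"
  using neg_unique[of "neg x" x] by simp

definition P where "P w \<longleftrightarrow> w\<in>A \<and> (\<forall>y\<in>A. y \<oplus> w = w \<oplus> y \<and> circ y w = y \<oplus> w \<and> circ w y = w \<oplus> y)"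

lemma center_P: assumes "z \<in> sb_center A add neg zero circ" shows "P z"
  unfolding P_def
proof (intro conjI ballI)
  show zA: "z\<in>A" using assms unfolding sb_center_def by auto
  fix y assume y: "y\<in>A"
  have s1: "(neg z \<oplus> circ z y) \<oplus> neg y = zero" and s2: "(neg y \<oplus> circ y z) \<oplus> neg z = zero"
    and s3: "((z \<oplus> y) \<oplus> neg z) \<oplus> neg y = zero"
    using assms y unfolding sb_center_def sb_star_def sb_comm_def by auto
  have "neg z \<oplus> circ z y = y" using L1[OF _ y s1] zA y by simp
  hence "circ z y = neg (neg z) \<oplus> y" using L3[of "neg z" "circ z y" y] zA y by simp
  thus "circ z y = z \<oplus> y" using negneg zA by simp
  have "neg y \<oplus> circ y z = z" using L1[OF _ zA s2] zA y by simp
  hence "circ y z = neg (neg y) \<oplus> z" using L3[of "neg y" "circ y z" z] zA y by simp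
  thus "circ y z = y \<oplus> z" using negneg y by simp
  have "(z \<oplus> y) \<oplus> neg z = y" using L1[OF _ y s3] zA y by simp
  thus "y \<oplus> z = z \<oplus> y" using L1[of "z \<oplus> y" z y] zA y by simp
qed

lemma P_zero: "P zero" unfolding P_def by simp

lemma P_add: assumes a: "P a" and b: "P b" shows "P (a \<oplus> b)"
proof -
  have aA: "a\<in>A" and bA: "b\<in>A" using a b unfolding P_def by auto
  have ca: "\<And>y. y\<in>A \<Longrightarrow> y \<oplus> a = a \<oplus> y \<and> circ y a = y \<oplus> a \<and> circ a y = a \<oplus> y"
    using a unfolding P_def by auto
  have cb: "\<And>y. y\<in>A \<Longrightarrow> y \<oplus> b = b \<oplus> y \<and> circ y b = y \<oplus> b \<and> circ b y = b \<oplus> y"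
    using b unfolding P_def by auto
  { fix y assume y: "y\<in>A"
    have "y \<oplus> (a \<oplus> b) = (y \<oplus> a) \<oplus> b" using aA bA y by (simp add: aassoc)
    also have "\<dots> = (a \<oplus> y) \<oplus> b" using ca y by simp
    also have "\<dots> = a \<oplus> (y \<oplus> b)" using aA bA y by (simp add: aassoc)
    also have "\<dots> = a \<oplus> (b \<oplus> y)" using cb y by simp
    also have "\<dots> = (a \<oplus> b) \<oplus> y" using aA bA y by (simp add: aassoc)
    finally have e1: "y \<oplus> (a \<oplus> b) = (a \<oplus> b) \<oplus> y" .
    have ya: "(y \<oplus> a) \<oplus> neg y = a" using ca[OF y] aA y by (simp add: aassoc)
    have "circ y (a \<oplus> b) = (circ y a \<oplus> neg y) \<oplus> circ y b" using br[OF y aA bA] .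
    also have "\<dots> = ((y \<oplus> a) \<oplus> neg y) \<oplus> (y \<oplus> b)" using ca[OF y] cb[OF y] by simp
    also have "\<dots> = a \<oplus> (b \<oplus> y)" using ya cb[OF y] by simp
    also have "\<dots> = y \<oplus> (a \<oplus> b)" using e1 aA bA y by (simp add: aassoc)
    finally have e2: "circ y (a \<oplus> b) = y \<oplus> (a \<oplus> b)" .
    have "circ (a \<oplus> b) y = circ (circ a b) y" using ca[OF bA] by simp
    also have "\<dots> = circ a (circ b y)" using aA bA y by (simp add: cassoc)
    also have "\<dots> = a \<oplus> (b \<oplus> y)" using ca[of "b \<oplus> y"] cb[OF y] bA y by simp
    also have "\<dots> = (a \<oplus> b) \<oplus> y" using aA bA y by (simp add: aassoc)
    finally have e3: "circ (a \<oplus> b) y = (a \<oplus> b) \<oplus> y" .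
    note e1 e2 e3 }
  thus ?thesis using aA bA unfolding P_def by auto
qed

lemma P_neg: assumes a: "P a" shows "P (neg a)"
proof -
  have aA: "a\<in>A" using a unfolding P_def by auto
  { fix y assume y: "y\<in>A"
    have ca: "y \<oplus> a = a \<oplus> y" "circ y a = y \<oplus> a" "circ a y = a \<oplus> y"
      "circ a (neg a) = a \<oplus> neg a"
      using a y aA unfolding P_def by auto
    have e1: "y \<oplus> neg a = neg a \<oplus> y"
    proof -
      have "neg a \<oplus> y = (neg a \<oplus> y \<oplus> a) \<oplus> neg a" using aA y by (simp add: aassoc)
      also have "neg a \<oplus> y \<oplus> a = neg a \<oplus> (y \<oplus> a)" using aA y by (simp only: aassoc negA)
      also have "\<dots> = neg a \<oplus> (a \<oplus> y)" using ca by simp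
      also have "\<dots> = y" using aA y by (simp add: aassoc[symmetric])
      finally show ?thesis by simp
    qed
    have "y = circ y (a \<oplus> neg a)" using aA y by simp
    also have "\<dots> = a \<oplus> circ y (neg a)"
      using br[OF y aA, of "neg a"] ca aA y by (simp add: aassoc)
    finally have "circ y (neg a) = neg a \<oplus> y" using L3[of a "circ y (neg a)" y] aA y by simp
    hence e2: "circ y (neg a) = y \<oplus> neg a" using e1 by simp
    have "circ a (circ (neg a) y) = y" using ca aA y by (simp add: cassoc[symmetric])
    moreover have "circ a (circ (neg a) y) = a \<oplus> circ (neg a) y" using a aA y unfolding P_def by simp
    ultimately have e3: "circ (neg a) y = neg a \<oplus> y" using L3[of a "circ (neg a) y" y] ca aA y by simp
    note e1 e2 e3 }
  thus ?thesis using aA unfolding P_def by auto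
qed

lemma P_A: "P w \<Longrightarrow> w \<in> A" unfolding P_def by auto

lemma neg_lem: assumes "P w" "x\<in>A" shows "neg (x \<oplus> w) = neg x \<oplus> neg w"
proof -
  have wA: "w\<in>A" using assms P_A by auto
  have c: "x \<oplus> w = w \<oplus> x" using assms unfolding P_def by auto
  have "(x \<oplus> w) \<oplus> (neg x \<oplus> neg w) = (w \<oplus> x) \<oplus> (neg x \<oplus> neg w)"
    using c by simp
  also have "\<dots> = w \<oplus> ((x \<oplus> neg x) \<oplus> neg w)" using wA assms by (simp only: aassoc negA addA)
  also have "\<dots> = zero" using wA assms by simp
  finally show ?thesis using neg_unique wA assms by simp
qed

lemma bar_lem: assumes "P w" "x\<in>A" shows "cinv (x \<oplus> w) = cinv x \<oplus> neg w"
proof -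
  have wA: "w\<in>A" using assms P_A by auto
  have c: "x \<oplus> w = circ w x" "circ w (neg w) = w \<oplus> neg w" using assms wA unfolding P_def by auto
  have pn: "P (neg w)" using P_neg assms by auto
  have c2: "circ (cinv x) (neg w) = cinv x \<oplus> neg w" using pn assms unfolding P_def by auto
  have "circ (circ w x) (circ (cinv x) (neg w)) = circ w (circ x (circ (cinv x) (neg w)))"
    using wA assms by (simp add: cassoc)
  also have "\<dots> = circ w (neg w)"
  proof -
    have "circ x (circ (cinv x) (neg w)) = circ (circ x (cinv x)) (neg w)"
      using wA assms by (intro cassoc[symmetric]) auto
    thus ?thesis using wA assms by simp
  qed
  also have "\<dots> = zero" using wA assms c by simp
  finally have "cinv (circ w x) = circ (cinv x) (neg w)" using cinv_unique wA assms by simp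
  thus ?thesis using c c2 by simp
qed

lemma plus_lem: assumes "P w1" "P w2" "a\<in>A" "b\<in>A"
  shows "(a \<oplus> w1) \<oplus> (b \<oplus> w2) = (a \<oplus> b) \<oplus> (w1 \<oplus> w2)"
proof -
  have w: "w1\<in>A" "w2\<in>A" using assms P_A by auto
  have c: "w1 \<oplus> b = b \<oplus> w1" using assms unfolding P_def by auto
  have "(a \<oplus> w1) \<oplus> (b \<oplus> w2) = a \<oplus> (w1 \<oplus> b) \<oplus> w2" using w assms by (simp add: aassoc)
  also have "\<dots> = (a \<oplus> b) \<oplus> (w1 \<oplus> w2)" using c w assms by (simp add: aassoc)
  finally show ?thesis .
qed

abbreviation m where "m k z \<equiv> int_mult add neg zero k z"

lemma funpow_A: "z\<in>A \<Longrightarrow> ((\<lambda>w. w \<oplus> z) ^^ n) zero \<in> A"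
  by (induction n) auto

lemma m_A: "z\<in>A \<Longrightarrow> m k z \<in> A"
  unfolding int_mult_def using funpow_A[of z] funpow_A[of "neg z"] by auto

lemma m_step: assumes z: "z\<in>A" shows "m (k+1) z = m k z \<oplus> z"
proof (cases "k \<ge> 0")
  case True
  hence "nat (k+1) = Suc (nat k)" by simp
  thus ?thesis using True unfolding int_mult_def by simp
next
  case False
  have g: "m (k+1) z = ((\<lambda>w. w \<oplus> neg z) ^^ (nat (-k) - 1)) zero"
  proof (cases "k = -1")
    case True thus ?thesis unfolding int_mult_def by simp
  next
    case False2: False
    hence "nat (-(k+1)) = nat (-k) - 1" using False by simp
    thus ?thesis using False False2 unfolding int_mult_def by simp
  qed
  have n: "nat (-k) = Suc (nat (-k) - 1)" using False by simp
  have "m k z = ((\<lambda>w. w \<oplus> neg z) ^^ Suc (nat (-k) - 1)) zero"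
    using False unfolding int_mult_def by (subst n[symmetric]) simp
  also have "\<dots> = m (k+1) z \<oplus> neg z" using g by simp
  finally have "m k z = m (k+1) z \<oplus> neg z" .
  thus ?thesis using L1[of "m (k+1) z" z "m k z"] m_A z by simp
qed

lemma m_zero[simp]: "m 0 z = zero" unfolding int_mult_def by simp
lemma m_one: "z\<in>A \<Longrightarrow> m 1 z = z" unfolding int_mult_def by simp

lemma m_stepdown: assumes z: "z\<in>A" shows "m (k-1) z = m k z \<oplus> neg z"
proof -
  have "m k z = m (k-1) z \<oplus> z" using m_step[OF z, of "k-1"] by simp
  hence "m k z \<oplus> neg z = m (k-1) z \<oplus> (z \<oplus> neg z)" using z m_A by (simp add: aassoc)
  thus ?thesis using z m_A by simp
qed

lemma m_add: assumes z: "z\<in>A" shows "m k1 z \<oplus> m k2 z = m (k1+k2) z"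
proof (induction k2 rule: int_induct[where k=0])
  case base thus ?case using m_A z by simp
next
  case (step1 i)
  have "m k1 z \<oplus> m (i+1) z = (m k1 z \<oplus> m i z) \<oplus> z" using m_step[OF z] m_A z by (simp add: aassoc)
  also have "\<dots> = m (k1+i+1) z" using step1 m_step[OF z] by simp
  finally show ?case by (simp add: add.assoc)
next
  case (step2 i)
  have "m k1 z \<oplus> m (i-1) z = (m k1 z \<oplus> m i z) \<oplus> neg z" using m_stepdown[OF z] m_A z by (simp add: aassoc)
  also have "\<dots> = m (k1+i-1) z" using step2 m_stepdown[OF z] by simp
  finally show ?case by (simp add: add_diff_eq)
qed

lemma m_neg: assumes z: "z\<in>A" shows "m (-k) z = neg (m k z)"
  using neg_unique[of "m k z" "m (-k) z"] m_add[OF z, of k "-k"] m_A z by simp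

lemma m_P: assumes "P z" shows "P (m k z)"
proof -
  have z: "z\<in>A" using assms P_A by auto
  show ?thesis
  proof (induction k rule: int_induct[where k=0])
    case base thus ?case using P_zero by simp
  next
    case (step1 i) thus ?case using m_step[OF z] P_add assms by simp
  next
    case (step2 i) thus ?case using m_stepdown[OF z] P_add P_neg assms by simp
  qed
qed

lemma eval_A: "(\<forall>i. \<rho> i \<in> A) \<Longrightarrow> sb_eval add neg zero circ cinv \<rho> t \<in> A"
  by (induction t) (auto simp: sb_star_def)

lemma eval_vars: "0 \<notin> vars t \<Longrightarrow> sb_eval add neg zero circ cinv (\<rho>(0 := x)) t = sb_eval add neg zero circ cinv \<rho> t"
  by (induction t) auto

lemma main: "not_under_star 0 t \<Longrightarrow> \<exists>k::int. \<forall>z \<in> sb_center A add neg zero circ. \<forall>\<rho>. (\<forall>i. \<rho> i \<in> A) \<longrightarrow>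
           sb_eval add neg zero circ cinv (\<rho>(0 := (\<rho> 0) \<oplus> z)) t =
           (sb_eval add neg zero circ cinv \<rho> t) \<oplus> (m k z)"
proof (induction t)
  case (Var j)
  show ?case
  proof (cases "j = 0")
    case True
    show ?thesis using True
      by (intro exI[of _ 1]) (auto simp: m_one P_A center_P)
  next
    case False
    show ?thesis using False
      by (intro exI[of _ 0]) auto
  qed
next
  case Zero
  show ?case by (intro exI[of _ 0]) auto
next
  case (Plus s t)
  have ns: "not_under_star 0 s" and nt: "not_under_star 0 t" using Plus.prems by auto
  obtain k1 k2 where k1: "\<forall>z \<in> sb_center A add neg zero circ. \<forall>\<rho>. (\<forall>i. \<rho> i \<in> A) \<longrightarrow>
           sb_eval add neg zero circ cinv (\<rho>(0 := (\<rho> 0) \<oplus> z)) s =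
           (sb_eval add neg zero circ cinv \<rho> s) \<oplus> (m k1 z)"
    and k2: "\<forall>z \<in> sb_center A add neg zero circ. \<forall>\<rho>. (\<forall>i. \<rho> i \<in> A) \<longrightarrow>
           sb_eval add neg zero circ cinv (\<rho>(0 := (\<rho> 0) \<oplus> z)) t =
           (sb_eval add neg zero circ cinv \<rho> t) \<oplus> (m k2 z)" using Plus.IH(1)[OF ns] Plus.IH(2)[OF nt] by blast
  show ?case
  proof (intro exI[of _ "k1+k2"] ballI allI impI)
    fix z and \<rho> :: "nat \<Rightarrow> 'a" assume z: "z \<in> sb_center A add neg zero circ" and r: "\<forall>i. \<rho> i \<in> A"
    have Pz: "P z" using center_P z by auto
    hence zA: "z\<in>A" using P_A by auto
    show "sb_eval add neg zero circ cinv (\<rho>(0 := (\<rho> 0) \<oplus> z)) (Plus s t) =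
           (sb_eval add neg zero circ cinv \<rho> (Plus s t)) \<oplus> (m (k1+k2) z)"
      using k1 k2 z r plus_lem[OF m_P[OF Pz] m_P[OF Pz] eval_A[OF r] eval_A[OF r]] m_add[OF zA]
      by simp
  qed
next
  case (Star s t)
  have v: "0 \<notin> vars (Star s t)" using Star.prems by simp
  show ?case
  proof (intro exI[of _ 0] ballI allI impI)
    fix z and \<rho> :: "nat \<Rightarrow> 'a" assume r: "\<forall>i. \<rho> i \<in> A"
    show "sb_eval add neg zero circ cinv (\<rho>(0 := (\<rho> 0) \<oplus> z)) (Star s t) =
           (sb_eval add neg zero circ cinv \<rho> (Star s t)) \<oplus> (m 0 z)"
      using eval_vars[OF v, of \<rho>] eval_A[OF r, of "Star s t"] by simp
  qed
next
  case (Neg s)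
  have ns: "not_under_star 0 s" using Neg.prems by auto
  obtain k1 where k1: "\<forall>z \<in> sb_center A add neg zero circ. \<forall>\<rho>. (\<forall>i. \<rho> i \<in> A) \<longrightarrow>
           sb_eval add neg zero circ cinv (\<rho>(0 := (\<rho> 0) \<oplus> z)) s =
           (sb_eval add neg zero circ cinv \<rho> s) \<oplus> (m k1 z)" using Neg.IH[OF ns] by blast
  show ?case
  proof (intro exI[of _ "-k1"] ballI allI impI)
    fix z and \<rho> :: "nat \<Rightarrow> 'a" assume z: "z \<in> sb_center A add neg zero circ" and r: "\<forall>i. \<rho> i \<in> A"
    have Pz: "P z" using center_P z by auto
    hence zA: "z\<in>A" using P_A by auto
    show "sb_eval add neg zero circ cinv (\<rho>(0 := (\<rho> 0) \<oplus> z)) (Neg s) =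
           (sb_eval add neg zero circ cinv \<rho> (Neg s)) \<oplus> (m (-k1) z)"
      using k1 z r neg_lem[OF m_P[OF Pz] eval_A[OF r]] m_neg[OF zA] by simp
  qed
next
  case (Bar s)
  have ns: "not_under_star 0 s" using Bar.prems by auto
  obtain k1 where k1: "\<forall>z \<in> sb_center A add neg zero circ. \<forall>\<rho>. (\<forall>i. \<rho> i \<in> A) \<longrightarrow>
           sb_eval add neg zero circ cinv (\<rho>(0 := (\<rho> 0) \<oplus> z)) s =
           (sb_eval add neg zero circ cinv \<rho> s) \<oplus> (m k1 z)" using Bar.IH[OF ns] by blast
  show ?case
  proof (intro exI[of _ "-k1"] ballI allI impI)
    fix z and \<rho> :: "nat \<Rightarrow> 'a" assume z: "z \<in> sb_center A add neg zero circ" and r: "\<forall>i. \<rho> i \<in> A"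
    have Pz: "P z" using center_P z by auto
    hence zA: "z\<in>A" using P_A by auto
    show "sb_eval add neg zero circ cinv (\<rho>(0 := (\<rho> 0) \<oplus> z)) (Bar s) =
           (sb_eval add neg zero circ cinv \<rho> (Bar s)) \<oplus> (m (-k1) z)"
      using k1 z r bar_lem[OF m_P[OF Pz] eval_A[OF r]] m_neg[OF zA] by simp
  qed
qed

end

theorem mainTheorem15:
  fixes A :: "'a set" and add circ :: "'a \<Rightarrow> 'a \<Rightarrow> 'a" and neg cinv :: "'a \<Rightarrow> 'a"
    and zero :: 'a and t :: sbterm
  assumes "skew_brace A add neg zero circ cinv"
    and "not_under_star 0 t"
  shows "\<exists>k::int. \<forall>z \<in> sb_center A add neg zero circ. \<forall>\<rho>. (\<forall>i. \<rho> i \<in> A) \<longrightarrow>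
           sb_eval add neg zero circ cinv (\<rho>(0 := add (\<rho> 0) z)) t =
           add (sb_eval add neg zero circ cinv \<rho> t) (int_mult add neg zero k z)"
proof -
  interpret sbr A add neg zero circ cinv using assms(1) by unfold_locales
  show ?thesis using main[OF assms(2)] by simp
qed

end
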